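(* Fix $c\in(0,1]$. Let $\mathcal T$ be an infinite set of positive integers and for each $t\in\mathcal T$ let $H_t$ be a triangle-free graph on $t$ vertices that is $d$-regular with $d=\Theta(t^{2/3})$ and all of whose eigenvalues other than the largest have absolute value $O(t^{1/3})$. For a configuration $(F,\phi)$ on $K=K_{H_t,H_t}$ define \[\zeta_i=\frac{1}{td}\sum_{\substack{u^{\mathtt x}w^{\mathtt y}\in F\\ \text{internal}}}\phi(u^{\mathtt x})\phi(w^{\mathtt y}),\qquad \zeta_e=\frac{1}{t^2}\sum_{\substack{u^{\mathtt x}w^{\mathtt y}\in F\\ \text{external}}}\phi(u^{\mathtt x})\phi(w^{\mathtt y}).\] Then $\zeta_i+\zeta_e<1+o(1)$, where the $o(1)$ tends to $0$ as $t\to\infty$ in $\mathcal T$, uniformly over all configurations $(F,\phi)$ on $K_{H_t,H_t}$.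
   Context: For a graph $H$ on $t$ vertices, $K=K_{H,H}$ is the graph on $X\cup Y$ ($X,Y$ disjoint copies of $V(H)$) with $K[X]\cong K[Y]\cong H$ (natural copies) and all $X$–$Y$ edges present; edges within a side are internal, $X$–$Y$ edges are external. $K^+$ has vertices $v^{\mathtt b},v^{\mathtt s}$ ($v\in V(K)$), with $u^{\mathtt x}w^{\mathtt y}$ an edge iff $uw\in E(K)$, or $u=w$ and $\{\mathtt x,\mathtt y\}=\{\mathtt b,\mathtt s\}$ (vertex edges). An edge $u^{\mathtt x}w^{\mathtt y}$ with $u\ne w$ is internal/external as $uw$ is. A subgraph of $K^+$ is ETF if it contains no triangle containing an external edge. A configuration on $K$ is a pair $(F,\phi)$, $F\subseteq E(K^+)$, $\phi:V(K^+)\to[0,1]$, such that $F$ is ETF, contains all vertex edges, $N_F(v^{\mathtt b})\cap N_F(v^{\mathtt s})=\varnothing$ for all $v\in V(K)$, and $\phi(v^{\mathtt b})\in[1/2,1]$, $\phi(v^{\mathtt s})=1-\phi(v^{\mathtt b})$. *)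

theory Defs
  imports Complex_Main "Jordan_Normal_Form.Char_Poly"
begin

definition adj_matrix :: "nat \<Rightarrow> (nat \<Rightarrow> nat \<Rightarrow> bool) \<Rightarrow> real mat" where
  "adj_matrix t H = mat t t (\<lambda>(i,j). if H i j then 1 else 0)"

definition graph_spectrum :: "nat \<Rightarrow> (nat \<Rightarrow> nat \<Rightarrow> bool) \<Rightarrow> real multiset" where
  "graph_spectrum t H = proots (char_poly (adj_matrix t H))"

definition nontrivial_eigenvalues :: "nat \<Rightarrow> (nat \<Rightarrow> nat \<Rightarrow> bool) \<Rightarrow> real multiset" where
  "nontrivial_eigenvalues t H =
     graph_spectrum t H - {# Max (set_mset (graph_spectrum t H)) #}"

definition simple_graph_on :: "nat \<Rightarrow> (nat \<Rightarrow> nat \<Rightarrow> bool) \<Rightarrow> bool" where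
  "simple_graph_on t H \<longleftrightarrow>
     (\<forall>u<t. \<forall>w<t. H u w \<longleftrightarrow> H w u) \<and> (\<forall>u<t. \<not> H u u)"

definition triangle_free_on :: "nat \<Rightarrow> (nat \<Rightarrow> nat \<Rightarrow> bool) \<Rightarrow> bool" where
  "triangle_free_on t H \<longleftrightarrow>
     \<not> (\<exists>u<t. \<exists>v<t. \<exists>w<t. H u v \<and> H v w \<and> H u w)"

definition regular_on :: "nat \<Rightarrow> (nat \<Rightarrow> nat \<Rightarrow> bool) \<Rightarrow> nat \<Rightarrow> bool" where
  "regular_on t H d \<longleftrightarrow> (\<forall>u<t. card {w. w < t \<and> H u w} = d)"

(* Vertices of K^+ for K = K_{H,H}: (side, is_b, v) with side True = X, False = Y,
   is_b True = copy b, False = copy s, and v \<in> {0..<t} a vertex of H. *)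
type_synonym kpv = "bool \<times> bool \<times> nat"

definition kplus_verts :: "nat \<Rightarrow> kpv set" where
  "kplus_verts t = {(s, x, v). v < t}"

(* adjacency in K = K_{H,H}: vertices (side, v) *)
definition K_adj :: "(nat \<Rightarrow> nat \<Rightarrow> bool) \<Rightarrow> bool \<times> nat \<Rightarrow> bool \<times> nat \<Rightarrow> bool" where
  "K_adj H a b = (if fst a = fst b then H (snd a) (snd b) else True)"

definition kplus_adj :: "(nat \<Rightarrow> nat \<Rightarrow> bool) \<Rightarrow> kpv \<Rightarrow> kpv \<Rightarrow> bool" where
  "kplus_adj H a b =
     (case a of (s1, x1, u) \<Rightarrow> case b of (s2, x2, w) \<Rightarrow>
        K_adj H (s1, u) (s2, w) \<or> ((s1, u) = (s2, w) \<and> x1 \<noteq> x2))"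

definition kplus_edges :: "nat \<Rightarrow> (nat \<Rightarrow> nat \<Rightarrow> bool) \<Rightarrow> kpv set set" where
  "kplus_edges t H = {{a, b} | a b. a \<in> kplus_verts t \<and> b \<in> kplus_verts t \<and> kplus_adj H a b}"

definition internal_edge :: "kpv set \<Rightarrow> bool" where
  "internal_edge e \<longleftrightarrow>
     (\<exists>a b. e = {a, b} \<and> fst a = fst b \<and> snd (snd a) \<noteq> snd (snd b))"

definition external_edge :: "kpv set \<Rightarrow> bool" where
  "external_edge e \<longleftrightarrow> (\<exists>a b. e = {a, b} \<and> fst a \<noteq> fst b)"

definition ETF :: "kpv set set \<Rightarrow> bool" where
  "ETF F \<longleftrightarrow>
     \<not> (\<exists>a b c. {a, b} \<in> F \<and> {b, c} \<in> F \<and> {a, c} \<in> F \<and>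
          (external_edge {a, b} \<or> external_edge {b, c} \<or> external_edge {a, c}))"

definition configuration ::
  "nat \<Rightarrow> (nat \<Rightarrow> nat \<Rightarrow> bool) \<Rightarrow> kpv set set \<Rightarrow> (kpv \<Rightarrow> real) \<Rightarrow> bool" where
  "configuration t H F \<phi> \<longleftrightarrow>
     F \<subseteq> kplus_edges t H \<and> ETF F \<and>
     (\<forall>s v. v < t \<longrightarrow> {(s, True, v), (s, False, v)} \<in> F) \<and>
     (\<forall>s v. v < t \<longrightarrow>
        \<not> (\<exists>z. {(s, True, v), z} \<in> F \<and> {(s, False, v), z} \<in> F)) \<and>
     (\<forall>s v. v < t \<longrightarrow> 1/2 \<le> \<phi> (s, True, v) \<and> \<phi> (s, True, v) \<le> 1 \<and>
                       \<phi> (s, False, v) = 1 - \<phi> (s, True, v))"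

definition zeta_i :: "nat \<Rightarrow> nat \<Rightarrow> kpv set set \<Rightarrow> (kpv \<Rightarrow> real) \<Rightarrow> real" where
  "zeta_i t d F \<phi> = (1 / (real t * real d)) * (\<Sum>e\<in>{e\<in>F. internal_edge e}. \<Prod>v\<in>e. \<phi> v)"

definition zeta_e :: "nat \<Rightarrow> kpv set set \<Rightarrow> (kpv \<Rightarrow> real) \<Rightarrow> real" where
  "zeta_e t F \<phi> = (1 / (real t)^2) * (\<Sum>e\<in>{e\<in>F. external_edge e}. \<Prod>v\<in>e. \<phi> v)"

end

theory Submission
  imports Defs "Jordan_Normal_Form.Schur_Decomposition"
begin


lemma adj_carrier: "adj_matrix t H \<in> carrier_mat t t"
  by (simp add: adj_matrix_def)
lemma adj_index: "i < t \<Longrightarrow> j < t \<Longrightarrow> adj_matrix t H $$ (i,j) = (if H i j then 1 else 0)"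
  by (simp add: adj_matrix_def)

lemma sym_real_root:
  fixes A :: "real mat"
  assumes A: "A \<in> carrier_mat n n" and sym: "\<And>i j. i<n \<Longrightarrow> j<n \<Longrightarrow> A $$ (i,j) = A $$ (j,i)"
    and ev: "eigenvalue (map_mat complex_of_real A) a"
  shows "Im a = 0"
proof -
  let ?Ac = "map_mat complex_of_real A"
  have Ac: "?Ac \<in> carrier_mat n n" using A by simp
  from ev obtain v where v: "v \<in> carrier_vec n" "v \<noteq> 0\<^sub>v n" "?Ac *\<^sub>v v = a \<cdot>\<^sub>v v"
    unfolding eigenvalue_def eigenvector_def using Ac by auto
  have comp: "(\<Sum>j=0..<n. complex_of_real (A $$ (i,j)) * v $ j) = a * v $ i" if "i<n" for i
  proof -
    have "(?Ac *\<^sub>v v) $ i = (a \<cdot>\<^sub>v v) $ i" using v(3) by simp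
    then show ?thesis using that A v(1) by (simp add: scalar_prod_def)
  qed
  define s where "s = (\<Sum>i=0..<n. cnj (v $ i) * (\<Sum>j=0..<n. complex_of_real (A $$ (i,j)) * v $ j))"
  define r where "r = (\<Sum>i=0..<n. (cmod (v $ i))^2)"
  have s1: "s = a * complex_of_real r"
  proof -
    have "s = (\<Sum>i=0..<n. a * (cnj (v $ i) * v $ i))" unfolding s_def
      by (intro sum.cong refl) (simp add: comp)
    also have "\<dots> = a * (\<Sum>i=0..<n. complex_of_real ((cmod (v $ i))^2))"
      unfolding sum_distrib_left by (intro sum.cong refl) (metis complex_norm_square mult.commute)
    finally show ?thesis by (simp add: r_def)
  qed
  have s2: "cnj s = s"
  proof -
    have "cnj s = (\<Sum>i=0..<n. \<Sum>j=0..<n. v $ i * complex_of_real (A $$ (i,j)) * cnj (v $ j))"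
      unfolding s_def by (simp add: sum_distrib_left mult.commute mult.left_commute)
    also have "\<dots> = (\<Sum>j=0..<n. \<Sum>i=0..<n. v $ i * complex_of_real (A $$ (i,j)) * cnj (v $ j))"
      by (rule sum.swap)
    also have "\<dots> = s" unfolding s_def sum_distrib_left
      by (intro sum.cong refl) (simp add: sym mult.commute mult.left_commute)
    finally show ?thesis .
  qed
  have "r > 0"
  proof -
    from v(1,2) obtain i where i: "i < n" "v $ i \<noteq> 0" by (metis carrier_vecD eq_vecI index_zero_vec(1,2))
    have "(cmod (v $ i))^2 > 0" using i by simp
    moreover have "(cmod (v $ i))^2 \<le> r" unfolding r_def
      by (rule member_le_sum) (use i in auto)
    ultimately show ?thesis by linarith
  qed
  have "Im s = 0" using arg_cong[OF s2, of Im] by simp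
  then have "Im a * r = 0" using s1 by simp
  then show ?thesis using \<open>r > 0\<close> by simp
qed

lemma sym_char_poly_split:
  fixes A :: "real mat"
  assumes A: "A \<in> carrier_mat n n" and sym: "\<And>i j. i<n \<Longrightarrow> j<n \<Longrightarrow> A $$ (i,j) = A $$ (j,i)"
  shows "\<exists>es. char_poly A = (\<Prod>e\<leftarrow>es. [:- e, 1:]) \<and> length es = n"
proof -
  let ?Ac = "map_mat complex_of_real A"
  have Ac: "?Ac \<in> carrier_mat n n" using A by simp
  from char_poly_factorized[OF Ac] obtain as where
    as: "char_poly ?Ac = (\<Prod>a\<leftarrow>as. [:- a, 1:])" "length as = n" by blast
  have cpm: "char_poly ?Ac = map_poly complex_of_real (char_poly A)"
    by (rule of_real_hom.char_poly_hom[OF A])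
  have real: "Im a = 0" if "a \<in> set as" for a
  proof -
    have "poly (char_poly ?Ac) a = 0" unfolding as(1) using that
      by (induct as) (auto simp: poly_prod_list)
    then have "eigenvalue ?Ac a" using eigenvalue_root_char_poly[OF Ac] by simp
    then show ?thesis using sym_real_root[OF A sym] by blast
  qed
  define es where "es = map Re as"
  have ases: "as = map complex_of_real es" unfolding es_def using real
    by (induct as) (auto simp: complex_eq_iff)
  interpret m: map_poly_comm_ring_hom "complex_of_real" ..
  have "map_poly complex_of_real (char_poly A) = map_poly complex_of_real (\<Prod>e\<leftarrow>es. [:- e, 1:])"
    unfolding cpm[symmetric] as(1) ases m.hom_prod_list by (simp add: o_def)
  then have "char_poly A = (\<Prod>e\<leftarrow>es. [:- e, 1:])"
  proof (intro poly_eqI)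
    fix k assume h: "map_poly complex_of_real (char_poly A) = map_poly complex_of_real (\<Prod>e\<leftarrow>es. [:- e, 1:])"
    have "coeff (map_poly complex_of_real (char_poly A)) k = coeff (map_poly complex_of_real (\<Prod>e\<leftarrow>es. [:- e, 1:])) k"
      using h by simp
    then show "coeff (char_poly A) k = coeff (\<Prod>e\<leftarrow>es. [:- e, 1:]) k"
      by (simp add: coeff_map_poly)
  qed
  then show ?thesis using as(2) es_def by (intro exI[of _ es]) simp
qed

definition mtr :: "real mat \<Rightarrow> real" where "mtr M = (\<Sum>i<dim_row M. M $$ (i,i))"

lemma mtr_comm:
  assumes X: "X \<in> carrier_mat n m" and Y: "Y \<in> carrier_mat m n"
  shows "mtr (X * Y) = mtr (Y * X)"
proof -
  have "mtr (X * Y) = (\<Sum>i<n. \<Sum>k<m. X $$ (i,k) * Y $$ (k,i))"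
    unfolding mtr_def using X Y
    by (intro sum.cong) (auto simp: scalar_prod_def lessThan_atLeast0)
  also have "\<dots> = (\<Sum>k<m. \<Sum>i<n. X $$ (i,k) * Y $$ (k,i))" by (rule sum.swap)
  also have "\<dots> = mtr (Y * X)"
    unfolding mtr_def using X Y
    by (intro sum.cong) (auto simp: scalar_prod_def lessThan_atLeast0 mult.commute)
  finally show ?thesis .
qed

lemma ut_mult:
  fixes A B :: "real mat"
  assumes A: "A \<in> carrier_mat n n" and B: "B \<in> carrier_mat n n"
    and uA: "upper_triangular A" and uB: "upper_triangular B"
  shows "upper_triangular (A * B)" "\<And>i. i < n \<Longrightarrow> (A * B) $$ (i,i) = A $$ (i,i) * B $$ (i,i)"
proof -
  have ent: "(A * B) $$ (i,j) = (\<Sum>k\<in>{0..<n}. A $$ (i,k) * B $$ (k,j))" if "i<n" "j<n" for i j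
    using A B that by (simp add: scalar_prod_def)
  have Az: "A $$ (i,k) = 0" if "k < i" "i < n" for i k using uA A that by (auto simp: upper_triangular_def)
  have Bz: "B $$ (k,j) = 0" if "j < k" "k < n" for j k using uB B that by (auto simp: upper_triangular_def)
  show "upper_triangular (A * B)"
  proof (rule upper_triangularI)
    fix i j assume ij: "j < i" "i < dim_row (A * B)"
    then have i: "i < n" using A by simp
    have "(\<Sum>k\<in>{0..<n}. A $$ (i,k) * B $$ (k,j)) = 0"
    proof (rule sum.neutral, rule ballI)
      fix k assume k: "k \<in> {0..<n}"
      show "A $$ (i,k) * B $$ (k,j) = 0"
      proof (cases "k < i")
        case True then show ?thesis using Az i by simp
      next
        case False then show ?thesis using Bz ij k by simp
      qed
    qed
    then show "(A * B) $$ (i,j) = 0" using ent[of i j] i ij by simp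
  qed
  fix i assume i: "i < n"
  have "(\<Sum>k\<in>{0..<n}. A $$ (i,k) * B $$ (k,i)) = A $$ (i,i) * B $$ (i,i) + (\<Sum>k\<in>{0..<n} - {i}. A $$ (i,k) * B $$ (k,i))"
    using i by (subst sum.remove[of _ i]) auto
  also have "(\<Sum>k\<in>{0..<n} - {i}. A $$ (i,k) * B $$ (k,i)) = 0"
  proof (rule sum.neutral, rule ballI)
    fix k assume k: "k \<in> {0..<n} - {i}"
    show "A $$ (i,k) * B $$ (k,i) = 0"
    proof (cases "k < i")
      case True then show ?thesis using Az i by simp
    next
      case False then show ?thesis using Bz k by simp
    qed
  qed
  finally show "(A * B) $$ (i,i) = A $$ (i,i) * B $$ (i,i)" using ent[OF i i] by simp
qed

lemma ut_pow:
  fixes B :: "real mat"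
  assumes B: "B \<in> carrier_mat n n" and uB: "upper_triangular B"
  shows "upper_triangular (B ^\<^sub>m k) \<and> (\<forall>i<n. (B ^\<^sub>m k) $$ (i,i) = (B $$ (i,i))^k)"
proof (induct k)
  case 0 then show ?case using B by simp
next
  case (Suc k)
  have Bk: "B ^\<^sub>m k \<in> carrier_mat n n" using B by simp
  show ?case using ut_mult[OF Bk B] Suc uB by simp
qed

lemma proots_lin: "proots (\<Prod>e\<leftarrow>es. [:- e, 1:]) = mset (es :: real list)"
proof (induct es)
  case Nil then show ?case by simp
next
  case (Cons e es)
  have nz: "(\<Prod>e\<leftarrow>es. [:- e, 1:]) \<noteq> (0 :: real poly)"
    by (auto simp: prod_list_zero_iff)
  have "(\<Prod>e\<leftarrow>e#es. [:- e, 1:]) = [:- e, 1:] * (\<Prod>e\<leftarrow>es. [:- e, 1:])" by simp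
  then have "proots (\<Prod>e\<leftarrow>e#es. [:- e, 1:]) = proots ([:- e, 1:] * (\<Prod>e\<leftarrow>es. [:- e, 1:]))" by simp
  also have "\<dots> = proots [:- e, 1:] + proots (\<Prod>e\<leftarrow>es. [:- e, 1:])"
    by (rule proots_mult) (use nz in auto)
  also have "proots [:- e, 1:] = {#e#}" using proots_linear_factor[of "-e"] by simp
  finally show ?case using Cons by simp
qed

lemma sum_mset_nth: "(\<Sum>x\<in>#mset es. f x) = (\<Sum>i<length es. f (es ! i))"
proof (induct es)
  case Nil then show ?case by simp
next
  case (Cons e es)
  then show ?case by (simp del: sum.lessThan_Suc add: sum.lessThan_Suc_shift)
qed

lemma adj_sym: "simple_graph_on t H \<Longrightarrow> i<t \<Longrightarrow> j<t \<Longrightarrow> adj_matrix t H $$ (i,j) = adj_matrix t H $$ (j,i)"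
  by (auto simp: adj_index simple_graph_on_def)

lemma spectral:
  assumes sg: "simple_graph_on t H" and reg: "regular_on t H d"
  shows "size (graph_spectrum t H) = t"
    "(\<Sum>j<t. \<Sum>k<t. (real (card {i. i<t \<and> H j i \<and> H i k}))^2) = (\<Sum>\<mu>\<in>#graph_spectrum t H. \<mu>^4)"
    "\<forall>\<mu>\<in>#graph_spectrum t H. \<bar>\<mu>\<bar> \<le> real d"
proof -
  define A where "A = adj_matrix t H"
  have A: "A \<in> carrier_mat t t" unfolding A_def by (rule adj_carrier)
  have Aij: "A $$ (i,j) = (if H i j then 1 else 0)" if "i<t" "j<t" for i j
    unfolding A_def using that by (rule adj_index)
  have sym: "A $$ (i,j) = A $$ (j,i)" if "i<t" "j<t" for i j
    unfolding A_def using sg that by (rule adj_sym)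
  obtain es where es: "char_poly A = (\<Prod>e\<leftarrow>es. [:- e, 1:])" "length es = t"
    using sym_char_poly_split[OF A sym] by blast
  have spec: "graph_spectrum t H = mset es"
    unfolding graph_spectrum_def A_def[symmetric] es(1) by (rule proots_lin)
  show "size (graph_spectrum t H) = t" using spec es(2) by simp
  obtain B P Q where BPQ: "schur_decomposition A es = (B,P,Q)" by (cases "schur_decomposition A es") auto
  from schur_decomposition[OF A es(1) BPQ] have wit: "similar_mat_wit A B P Q"
    and uB: "upper_triangular B" and dB: "diag_mat B = es" by auto
  note W = similar_mat_witD2[OF A wit]
  define B4 where "B4 = B ^\<^sub>m 4"
  have B4: "B4 \<in> carrier_mat t t" unfolding B4_def using W(5) by simp
  have "A ^\<^sub>m 4 = P * B4 * Q" unfolding B4_def by (rule similar_mat_wit_pow_id[OF wit])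
  then have "mtr (A ^\<^sub>m 4) = mtr (Q * (P * B4))"
    using mtr_comm[of "P * B4" t t Q] W B4 by simp
  also have "Q * (P * B4) = (Q * P) * B4" using assoc_mult_mat[of Q t t P t B4 t] W(6,7) B4 by simp
  also have "\<dots> = B4" using W(2) B4 by simp
  finally have tr1: "mtr (A ^\<^sub>m 4) = mtr B4" .
  have "mtr B4 = (\<Sum>i<t. (B $$ (i,i))^4)"
    unfolding mtr_def B4_def using ut_pow[OF W(5) uB, of 4] W(5) by simp
  also have "\<dots> = (\<Sum>i<length es. (es ! i)^4)"
    using dB W(5) es(2) by (intro sum.cong) (auto simp: diag_mat_def)
  also have "\<dots> = (\<Sum>\<mu>\<in>#graph_spectrum t H. \<mu>^4)" unfolding spec sum_mset_nth ..
  finally have tr2: "mtr (A ^\<^sub>m 4) = (\<Sum>\<mu>\<in>#graph_spectrum t H. \<mu>^4)" using tr1 by simp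
  define A2 where "A2 = A * A"
  have A2: "A2 \<in> carrier_mat t t" unfolding A2_def using A by simp
  have A2ij: "A2 $$ (j,k) = real (card {i. i<t \<and> H j i \<and> H i k})" if "j<t" "k<t" for j k
  proof -
    have "A2 $$ (j,k) = (\<Sum>i\<in>{0..<t}. A $$ (j,i) * A $$ (i,k))"
      unfolding A2_def using A that by (simp add: scalar_prod_def)
    also have "\<dots> = (\<Sum>i\<in>{0..<t}. if H j i \<and> H i k then 1 else 0)"
      using that by (intro sum.cong) (auto simp: Aij)
    also have "\<dots> = real (card {i\<in>{0..<t}. H j i \<and> H i k})"
      by (simp add: sum.If_cases Int_def)
    also have "{i\<in>{0..<t}. H j i \<and> H i k} = {i. i<t \<and> H j i \<and> H i k}" by auto
    finally show ?thesis .
  qed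
  have A2sym: "A2 $$ (j,k) = A2 $$ (k,j)" if "j<t" "k<t" for j k
  proof -
    have "{i. i<t \<and> H j i \<and> H i k} = {i. i<t \<and> H k i \<and> H i j}"
      using sg that by (auto simp: simple_graph_on_def)
    then show ?thesis using A2ij that by simp
  qed
  have A4: "A ^\<^sub>m 4 = A2 * A2"
    unfolding A2_def using A by (simp add: numeral_eq_Suc assoc_mult_mat[of _ t t _ t _ t])
  have "mtr (A ^\<^sub>m 4) = (\<Sum>j<t. \<Sum>k<t. A2 $$ (j,k) * A2 $$ (k,j))"
    unfolding A4 mtr_def using A2 by (intro sum.cong) (auto simp: scalar_prod_def lessThan_atLeast0)
  also have "\<dots> = (\<Sum>j<t. \<Sum>k<t. (real (card {i. i<t \<and> H j i \<and> H i k}))^2)"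
    by (intro sum.cong refl) (simp add: A2sym[symmetric] A2ij power2_eq_square)
  finally show "(\<Sum>j<t. \<Sum>k<t. (real (card {i. i<t \<and> H j i \<and> H i k}))^2) = (\<Sum>\<mu>\<in>#graph_spectrum t H. \<mu>^4)"
    using tr2 by simp
  show "\<forall>\<mu>\<in>#graph_spectrum t H. \<bar>\<mu>\<bar> \<le> real d"
  proof
    fix \<mu> assume "\<mu> \<in># graph_spectrum t H"
    then have "\<mu> \<in> set es" using spec by simp
    then have "poly (char_poly A) \<mu> = 0" unfolding es(1)
      by (induct es) (auto simp: poly_prod_list)
    then have "eigenvalue A \<mu>" using eigenvalue_root_char_poly[OF A] by simp
    then obtain v where v: "v \<in> carrier_vec t" "v \<noteq> 0\<^sub>v t" "A *\<^sub>v v = \<mu> \<cdot>\<^sub>v v"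
      unfolding eigenvalue_def eigenvector_def using A by auto
    from v(1,2) obtain i0 where i0: "i0 < t" "v $ i0 \<noteq> 0" by (metis carrier_vecD eq_vecI index_zero_vec(1,2))
    define m where "m = Max ((\<lambda>j. \<bar>v $ j\<bar>) ` {..<t})"
    have fin: "finite ((\<lambda>j. \<bar>v $ j\<bar>) ` {..<t})" by simp
    have ne: "(\<lambda>j. \<bar>v $ j\<bar>) ` {..<t} \<noteq> {}" using i0 by auto
    obtain i where i: "i < t" "\<bar>v $ i\<bar> = m" using Max_in[OF fin ne] unfolding m_def by auto
    have le: "\<bar>v $ j\<bar> \<le> m" if "j < t" for j unfolding m_def using that by (intro Max_ge) auto
    have "m > 0" using le[OF i0(1)] i0(2) by linarith
    have "(\<Sum>j\<in>{0..<t}. A $$ (i,j) * v $ j) = \<mu> * v $ i"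
    proof -
      have "(A *\<^sub>v v) $ i = (\<mu> \<cdot>\<^sub>v v) $ i" using v(3) by simp
      then show ?thesis using i A v(1) by (simp add: scalar_prod_def)
    qed
    then have "\<bar>\<mu>\<bar> * m = \<bar>\<Sum>j\<in>{0..<t}. A $$ (i,j) * v $ j\<bar>" using i by (simp add: abs_mult)
    also have "\<dots> \<le> (\<Sum>j\<in>{0..<t}. \<bar>A $$ (i,j) * v $ j\<bar>)" by (rule sum_abs)
    also have "\<dots> \<le> (\<Sum>j\<in>{0..<t}. (if H i j then 1 else 0) * m)"
      using i le by (intro sum_mono) (auto simp: Aij abs_mult)
    also have "\<dots> = real (card {j\<in>{0..<t}. H i j}) * m"
      by (simp add: sum_distrib_right[symmetric] sum.If_cases Int_def)
    also have "{j\<in>{0..<t}. H i j} = {w. w < t \<and> H i w}" by auto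
    also have "card {w. w < t \<and> H i w} = d" using reg i unfolding regular_on_def by auto
    finally show "\<bar>\<mu>\<bar> \<le> real d" using \<open>m > 0\<close> by simp
  qed
qed



lemma cs_sum:
  fixes a b :: "'i \<Rightarrow> real"
  shows "(\<Sum>i\<in>I. a i * b i)^2 \<le> (\<Sum>i\<in>I. (a i)^2) * (\<Sum>i\<in>I. (b i)^2)"
proof (cases "finite I")
  case True
  let ?A = "\<Sum>i\<in>I. (a i)^2" and ?B = "\<Sum>i\<in>I. (b i)^2" and ?C = "\<Sum>i\<in>I. a i * b i"
  have "0 \<le> (\<Sum>i\<in>I. (?B * a i - ?C * b i)^2)" by (intro sum_nonneg) auto
  also have "\<dots> = (\<Sum>i\<in>I. ?B^2 * (a i)^2 - 2*?B*?C*(a i * b i) + ?C^2*(b i)^2)"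
    by (rule sum.cong) (simp_all add: power2_eq_square algebra_simps)
  also have "\<dots> = ?B^2 * ?A - 2 * ?B * ?C * ?C + ?C^2 * ?B"
    by (simp add: sum.distrib sum_subtractf sum_distrib_left[symmetric])
  finally have h: "0 \<le> ?B * (?B * ?A - ?C^2)" by (simp add: power2_eq_square algebra_simps)
  show ?thesis
  proof (cases "?B = 0")
    case True
    then have "\<forall>i\<in>I. b i = 0" using \<open>finite I\<close> by (simp add: sum_nonneg_eq_0_iff)
    then show ?thesis by simp
  next
    case False
    then have "?B > 0" by (metis (no_types, lifting) order_le_less sum_nonneg zero_le_power2)
    with h have "0 \<le> ?B * ?A - ?C^2" by (simp add: zero_le_mult_iff)
    then show ?thesis by (simp add: algebra_simps)
  qed
qed simp

lemma sum_indicator_card: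
  "finite A \<Longrightarrow> (\<Sum>x\<in>A. if P x then (1::real) else 0) = real (card {x\<in>A. P x})"
  by (simp add: sum.If_cases Int_def)

lemma mixing:
  fixes t d :: nat and H :: "nat \<Rightarrow> nat \<Rightarrow> bool" and G :: "nat \<Rightarrow> real"
  assumes sym: "\<forall>u<t. \<forall>w<t. H u w \<longleftrightarrow> H w u"
    and reg: "\<forall>u<t. card {w. w < t \<and> H u w} = d"
  defines "T \<equiv> \<Sum>j<t. \<Sum>k<t. (real (card {i. i<t \<and> H j i \<and> H i k}) - real d^2 / real t)^2"
  shows "\<bar>(\<Sum>u<t. \<Sum>w<t. if H u w then G u * G w else 0) - real d / real t * (\<Sum>u<t. G u)^2\<bar>
          \<le> sqrt (sqrt T) * (\<Sum>u<t. (G u)^2)"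
proof (cases "t = 0")
  case True then show ?thesis by simp
next
  case False
  then have tpos: "real t > 0" by simp
  define c where "c = real d / real t"
  define M where "M j k = (if H j k then 1 else 0) - c" for j k
  have Msym: "M j k = M k j" if "j<t" "k<t" for j k using sym that by (auto simp: M_def)
  have deg: "(\<Sum>w<t. if H u w then 1 else 0) = real d" if "u<t" for u
  proof -
    have "{w\<in>{..<t}. H u w} = {w. w < t \<and> H u w}" by auto
    then show ?thesis using reg that by (simp add: sum_indicator_card)
  qed
  have deg2: "(\<Sum>i<t. if H i k then 1 else 0) = real d" if "k<t" for k
  proof -
    have "(\<Sum>i<t. if H i k then (1::real) else 0) = (\<Sum>i<t. if H k i then 1 else 0)"
      using sym that by (intro sum.cong) auto
    then show ?thesis using deg that by simp
  qed
  define N where "N j k = real (card {i. i<t \<and> H j i \<and> H i k}) - real d^2 / real t" for j k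
  have codeg: "(\<Sum>i<t. M j i * M i k) = N j k" if "j<t" "k<t" for j k
  proof -
    have "(\<Sum>i<t. M j i * M i k) = (\<Sum>i<t. (if H j i \<and> H i k then 1 else 0)
          - c * (if H i k then 1 else 0) - c * (if H j i then 1 else 0) + c^2)"
      by (rule sum.cong) (auto simp: M_def power2_eq_square algebra_simps)
    also have "\<dots> = (\<Sum>i<t. (if H j i \<and> H i k then 1 else 0))
          - c * (\<Sum>i<t. if H i k then 1 else 0) - c * (\<Sum>i<t. if H j i then 1 else 0) + real t * c^2"
      by (simp add: sum.distrib sum_subtractf sum_distrib_left[symmetric])
    also have "(\<Sum>i<t. (if H j i \<and> H i k then (1::real) else 0)) = real (card {i. i<t \<and> H j i \<and> H i k})"
    proof -
      have "{i\<in>{..<t}. H j i \<and> H i k} = {i. i<t \<and> H j i \<and> H i k}" by auto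
      then show ?thesis by (simp add: sum_indicator_card)
    qed
    finally have e: "(\<Sum>i<t. M j i * M i k) = real (card {i. i<t \<and> H j i \<and> H i k}) - c * real d - c * real d + real t * c^2"
      using deg[OF that(1)] deg2[OF that(2)] by simp
    have e1: "c * real d = real d^2 / real t" by (simp add: c_def power2_eq_square)
    have e2: "real t * c^2 = real d^2 / real t" using tpos by (simp add: c_def power2_eq_square)
    show ?thesis unfolding e e1 e2 N_def by simp
  qed
  define Q where "Q = (\<Sum>u<t. \<Sum>w<t. M u w * G u * G w)"
  have Qeq: "Q = (\<Sum>u<t. \<Sum>w<t. if H u w then G u * G w else 0) - c * (\<Sum>u<t. G u)^2"
  proof -
    have "Q = (\<Sum>u<t. \<Sum>w<t. (if H u w then G u * G w else 0) - c * (G u * G w))"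
      unfolding Q_def M_def by (intro sum.cong refl) (auto simp: algebra_simps)
    also have "\<dots> = (\<Sum>u<t. \<Sum>w<t. if H u w then G u * G w else 0) - c * (\<Sum>u<t. \<Sum>w<t. G u * G w)"
      by (simp add: sum_subtractf sum_distrib_left)
    also have "(\<Sum>u<t. \<Sum>w<t. G u * G w) = (\<Sum>u<t. G u)^2"
      by (simp add: power2_eq_square sum_product)
    finally show ?thesis .
  qed
  define v where "v i = (\<Sum>j<t. M i j * G j)" for i
  define X where "X = (\<Sum>u<t. (G u)^2)"
  have X0: "X \<ge> 0" unfolding X_def by (intro sum_nonneg) auto
  have Qv: "Q = (\<Sum>i<t. G i * v i)"
    by (simp add: Q_def v_def sum_distrib_left algebra_simps)
  have Q2: "Q^2 \<le> X * (\<Sum>i<t. (v i)^2)" unfolding Qv X_def by (rule cs_sum)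
  define w where "w j = (\<Sum>i<t. M j i * v i)" for j
  have vv: "(\<Sum>i<t. (v i)^2) = (\<Sum>j<t. G j * w j)"
  proof -
    have "(\<Sum>i<t. (v i)^2) = (\<Sum>i<t. \<Sum>j<t. v i * M i j * G j)"
      by (simp add: power2_eq_square v_def[of i for i] sum_distrib_left algebra_simps)
    also have "\<dots> = (\<Sum>j<t. \<Sum>i<t. v i * M i j * G j)" by (rule sum.swap)
    also have "\<dots> = (\<Sum>j<t. G j * w j)"
      unfolding w_def sum_distrib_left
      by (intro sum.cong refl) (auto simp: Msym algebra_simps)
    finally show ?thesis .
  qed
  have wN: "w j = (\<Sum>k<t. N j k * G k)" if "j<t" for j
  proof -
    have "w j = (\<Sum>i<t. \<Sum>k<t. M j i * M i k * G k)"
      by (simp add: w_def v_def sum_distrib_left algebra_simps)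
    also have "\<dots> = (\<Sum>k<t. \<Sum>i<t. M j i * M i k * G k)" by (rule sum.swap)
    also have "\<dots> = (\<Sum>k<t. (\<Sum>i<t. M j i * M i k) * G k)" by (simp add: sum_distrib_right)
    also have "\<dots> = (\<Sum>k<t. N j k * G k)" using codeg that by (intro sum.cong) auto
    finally show ?thesis .
  qed
  have V2: "(\<Sum>i<t. (v i)^2)^2 \<le> X * (\<Sum>j<t. (w j)^2)" unfolding vv X_def by (rule cs_sum)
  have W2: "(\<Sum>j<t. (w j)^2) \<le> T * X"
  proof -
    have "(\<Sum>j<t. (w j)^2) \<le> (\<Sum>j<t. (\<Sum>k<t. (N j k)^2) * X)"
      unfolding X_def by (intro sum_mono) (simp add: wN cs_sum)
    also have "\<dots> = T * X" by (simp add: T_def N_def sum_distrib_right)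
    finally show ?thesis .
  qed
  define Y where "Y = (\<Sum>i<t. (v i)^2)"
  have Y0: "Y \<ge> 0" unfolding Y_def by (intro sum_nonneg) auto
  have T0: "T \<ge> 0" unfolding T_def by (intro sum_nonneg) auto
  have "Y^2 \<le> T * X^2" using V2 W2 X0 unfolding Y_def
    by (smt (verit) mult_left_mono power2_eq_square mult.commute mult.assoc)
  then have "sqrt (Y^2) \<le> sqrt (T * X^2)" by (rule real_sqrt_le_mono)
  then have Yb: "Y \<le> sqrt T * X" using Y0 X0 by (simp add: real_sqrt_mult)
  have "Q^2 \<le> X * (sqrt T * X)" using Q2 Yb X0 unfolding Y_def
    by (meson mult_left_mono order_trans)
  then have "sqrt (Q^2) \<le> sqrt (sqrt T * X^2)" by (intro real_sqrt_le_mono) (simp add: power2_eq_square algebra_simps)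
  then have "\<bar>Q\<bar> \<le> sqrt (sqrt T) * X" using X0 by (simp add: real_sqrt_mult)
  then show ?thesis using Qeq by (simp add: c_def X_def)
qed


lemma kplus_verts_eq: "kplus_verts t = UNIV \<times> UNIV \<times> {..<t}"
  by (auto simp: kplus_verts_def)

lemma finite_kv[simp]: "finite (kplus_verts t)"
  by (simp add: kplus_verts_eq)

lemma split_sum:
  fixes f :: "kpv \<Rightarrow> real"
  shows "(\<Sum>x\<in>kplus_verts t. f x) =
    (\<Sum>u<t. f (True,True,u) + f (True,False,u) + f (False,True,u) + f (False,False,u))"
proof -
  have "(\<Sum>x\<in>kplus_verts t. f x) = (\<Sum>s\<in>UNIV. \<Sum>p\<in>UNIV \<times> {..<t}. f (s,p))"
    unfolding kplus_verts_eq by (simp add: sum.cartesian_product split_def)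
  also have "\<dots> = (\<Sum>s\<in>UNIV. \<Sum>a\<in>UNIV. \<Sum>u<t. f (s,a,u))"
    by (simp add: sum.cartesian_product)
  also have "\<dots> = (\<Sum>u<t. f (True,True,u) + f (True,False,u) + f (False,True,u) + f (False,False,u))"
    by (simp add: UNIV_bool sum.distrib)
  finally show ?thesis .
qed

lemma pair_sum:
  fixes P :: "'a \<Rightarrow> 'a \<Rightarrow> bool" and f :: "'a \<Rightarrow> real"
  assumes fin: "finite V" and sym: "\<And>a b. P a b \<Longrightarrow> P b a" and irr: "\<And>a b. P a b \<Longrightarrow> a \<noteq> b"
  shows "(\<Sum>a\<in>V. \<Sum>b\<in>V. if P a b then f a * f b else 0) =
         2 * (\<Sum>e\<in>{{a, b} | a b. a \<in> V \<and> b \<in> V \<and> P a b}. \<Prod>v\<in>e. f v)"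
proof -
  define S where "S = {p \<in> V \<times> V. P (fst p) (snd p)}"
  define h where "h p = {fst p, snd p}" for p :: "'a \<times> 'a"
  have finS: "finite S" unfolding S_def using fin by simp
  have "(\<Sum>a\<in>V. \<Sum>b\<in>V. if P a b then f a * f b else 0) = (\<Sum>p\<in>V \<times> V. if P (fst p) (snd p) then f (fst p) * f (snd p) else 0)"
    by (simp add: sum.cartesian_product split_def)
  also have "\<dots> = (\<Sum>p\<in>S. f (fst p) * f (snd p))"
    unfolding S_def using fin by (simp add: sum.inter_filter)
  also have "\<dots> = (\<Sum>e\<in>h ` S. \<Sum>p\<in>{p\<in>S. h p = e}. f (fst p) * f (snd p))"
    by (rule sum.image_gen[OF finS])
  also have "\<dots> = (\<Sum>e\<in>h ` S. 2 * (\<Prod>v\<in>e. f v))"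
  proof (rule sum.cong[OF refl])
    fix e assume "e \<in> h ` S"
    then obtain a b where ab: "(a,b) \<in> S" "e = {a,b}" unfolding h_def by auto
    then have Pab: "P a b" "a \<in> V" "b \<in> V" unfolding S_def by auto
    have ne: "a \<noteq> b" using irr Pab by auto
    have "{p\<in>S. h p = e} = {(a,b),(b,a)}"
      using ab Pab sym unfolding S_def h_def by (auto simp: doubleton_eq_iff)
    then show "(\<Sum>p\<in>{p\<in>S. h p = e}. f (fst p) * f (snd p)) = 2 * (\<Prod>v\<in>e. f v)"
      using ne ab by (simp add: mult.commute)
  qed
  also have "h ` S = {{a, b} | a b. a \<in> V \<and> b \<in> V \<and> P a b}"
    unfolding h_def S_def
  proof (intro equalityI subsetI)
    fix e assume "e \<in> (\<lambda>p. {fst p, snd p}) ` {p \<in> V \<times> V. P (fst p) (snd p)}"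
    then obtain a b where "e = {a,b}" "a \<in> V" "b \<in> V" "P a b" by auto
    then show "e \<in> {{a, b} | a b. a \<in> V \<and> b \<in> V \<and> P a b}"
      by (intro CollectI exI[of _ a] exI[of _ b]) simp
  next
    fix e assume "e \<in> {{a, b} | a b. a \<in> V \<and> b \<in> V \<and> P a b}"
    then obtain a b where "e = {a,b}" "a \<in> V" "b \<in> V" "P a b" by blast
    then show "e \<in> (\<lambda>p. {fst p, snd p}) ` {p \<in> V \<times> V. P (fst p) (snd p)}"
      by (intro image_eqI[of _ _ "(a,b)"]) auto
  qed
  finally show ?thesis by (simp add: sum_distrib_left)
qed

lemma sq4: "((a::real) + b + c + e)^2 \<le> 4 * (a^2 + b^2 + c^2 + e^2)"
proof -
  have "0 \<le> (a-b)^2 + (a-c)^2 + (a-e)^2 + (b-c)^2 + (b-e)^2 + (c-e)^2" by simp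
  moreover have "4 * (a^2 + b^2 + c^2 + e^2) - (a + b + c + e)^2 = (a-b)^2 + (a-c)^2 + (a-e)^2 + (b-c)^2 + (b-e)^2 + (c-e)^2"
    by (simp add: power2_eq_square algebra_simps)
  ultimately show ?thesis by linarith
qed

definition quad :: "(kpv \<Rightarrow> real) \<Rightarrow> nat \<Rightarrow> real" where
  "quad g u = g (True,True,u) + g (True,False,u) + g (False,True,u) + g (False,False,u)"

lemma sum_quad: "(\<Sum>a\<in>kplus_verts t. g a) = (\<Sum>u<t. quad g u)"
  unfolding quad_def by (rule split_sum)

lemma quad_form:
  fixes g :: "kpv \<Rightarrow> real"
  shows "(\<Sum>a\<in>kplus_verts t. \<Sum>b\<in>kplus_verts t. if H (snd (snd a)) (snd (snd b)) then g a * g b else 0)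
       = (\<Sum>u<t. \<Sum>w<t. if H u w then quad g u * quad g w else 0)"
proof -
  have inner: "(\<Sum>b\<in>kplus_verts t. if H (snd (snd a)) (snd (snd b)) then g a * g b else 0)
      = (\<Sum>w<t. if H (snd (snd a)) w then g a * quad g w else 0)" for a
    unfolding split_sum quad_def by (intro sum.cong refl) (auto simp: algebra_simps)
  have "(\<Sum>a\<in>kplus_verts t. \<Sum>b\<in>kplus_verts t. if H (snd (snd a)) (snd (snd b)) then g a * g b else 0)
      = (\<Sum>a\<in>kplus_verts t. \<Sum>w<t. if H (snd (snd a)) w then g a * quad g w else 0)"
    using inner by simp
  also have "\<dots> = (\<Sum>u<t. \<Sum>w<t. if H u w then quad g u * quad g w else 0)"
    unfolding split_sum sum.distrib[symmetric]
    by (intro sum.cong refl) (auto simp: quad_def algebra_simps)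
  finally show ?thesis .
qed

lemma quad_sq: "(\<Sum>u<t. (quad g u)^2) \<le> 4 * (\<Sum>a\<in>kplus_verts t. (g a)^2)"
proof -
  have "(\<Sum>u<t. (quad g u)^2) \<le> (\<Sum>u<t. 4 * ((g (True,True,u))^2 + (g (True,False,u))^2 + (g (False,True,u))^2 + (g (False,False,u))^2))"
    unfolding quad_def by (intro sum_mono sq4)
  also have "\<dots> = 4 * (\<Sum>a\<in>kplus_verts t. (g a)^2)"
    unfolding split_sum by (simp add: sum_distrib_left)
  finally show ?thesis .
qed

locale cfg =
  fixes t :: nat and H :: "nat \<Rightarrow> nat \<Rightarrow> bool" and d :: nat and F :: "kpv set set"
    and \<phi> :: "kpv \<Rightarrow> real" and \<sigma> :: real
  assumes conf: "configuration t H F \<phi>" and sg: "simple_graph_on t H" and reg: "regular_on t H d"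
    and sig: "\<sigma> \<ge> 0"
    and mix: "\<And>G. (\<Sum>u<t. \<Sum>w<t. if H u w then G u * G w else 0)
                  \<ge> real d / real t * (\<Sum>u<t. G u)^2 - \<sigma> * (\<Sum>u<t. (G u)^2)"
begin

abbreviation "V \<equiv> kplus_verts t"

definition adjE where "adjE a b \<longleftrightarrow> {a,b} \<in> F \<and> fst a \<noteq> fst b"
definition RR where "RR a = (\<Sum>z\<in>V. if adjE a z then \<phi> z else 0)"
definition CC where "CC a b = (\<Sum>z\<in>V. if adjE a z \<and> adjE b z then \<phi> z else 0)"
definition gg where "gg z a = (if adjE a z then \<phi> a / sqrt (RR a) else 0)"
definition SS where "SS z = (\<Sum>a\<in>V. gg z a)"
definition EO where "EO = (\<Sum>a\<in>V. \<Sum>b\<in>V. if adjE a b then \<phi> a * \<phi> b else 0)"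
definition IO where "IO = (\<Sum>a\<in>V. \<Sum>b\<in>V. if fst a = fst b \<and> snd (snd a) \<noteq> snd (snd b) \<and> {a,b} \<in> F then \<phi> a * \<phi> b else 0)"
definition PP where "PP = (\<Sum>z\<in>V. \<phi> z * (SS z)^2)"

lemma inV: "a \<in> V \<longleftrightarrow> snd (snd a) < t"
  by (cases a) (auto simp: kplus_verts_def)

lemma phi_props:
  assumes "a \<in> V" shows "0 \<le> \<phi> a" "\<phi> a \<le> 1"
proof -
  obtain s x v where a: "a = (s,x,v)" by (cases a) auto
  have v: "v < t" using assms a inV by simp
  have h: "1/2 \<le> \<phi> (s, True, v) \<and> \<phi> (s, True, v) \<le> 1 \<and> \<phi> (s, False, v) = 1 - \<phi> (s, True, v)"
    using conf v unfolding configuration_def by blast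
  show "0 \<le> \<phi> a" "\<phi> a \<le> 1" using h a by (cases x; auto)+
qed

lemma phi_sum: "v < t \<Longrightarrow> \<phi> (s,True,v) + \<phi> (s,False,v) = 1"
  using conf unfolding configuration_def by auto

lemma sum_phi: "(\<Sum>a\<in>V. \<phi> a) = 2 * real t"
proof -
  have "(\<Sum>a\<in>V. \<phi> a) = (\<Sum>u<t. (2::real))"
    unfolding split_sum
  proof (intro sum.cong refl)
    fix u assume "u \<in> {..<t}"
    then have u: "u < t" by simp
    show "\<phi> (True, True, u) + \<phi> (True, False, u) + \<phi> (False, True, u) + \<phi> (False, False, u) = 2"
      using phi_sum[OF u, of True] phi_sum[OF u, of False] by linarith
  qed
  then show ?thesis by simp
qed

lemma adj_sym: "adjE a b = adjE b a"
  unfolding adjE_def by (auto simp: insert_commute)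

lemma F_verts:
  assumes "{a,b} \<in> F" shows "a \<in> V" "b \<in> V"
proof -
  have "{a,b} \<in> kplus_edges t H" using assms conf unfolding configuration_def by auto
  then obtain a' b' where e: "{a,b} = {a',b'}" "a' \<in> V" "b' \<in> V"
    unfolding kplus_edges_def by auto
  then show "a \<in> V" "b \<in> V" by (auto simp: doubleton_eq_iff)
qed

lemma F_H:
  assumes "{a,b} \<in> F" "fst a = fst b" "snd (snd a) \<noteq> snd (snd b)"
  shows "H (snd (snd a)) (snd (snd b))"
proof -
  have "{a,b} \<in> kplus_edges t H" using assms conf unfolding configuration_def by auto
  then obtain a' b' where e: "{a,b} = {a',b'}" "a' \<in> V" "b' \<in> V" "kplus_adj H a' b'"
    unfolding kplus_edges_def by auto
  have aV: "a \<in> V" "b \<in> V" using F_verts assms by auto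
  from e(1) have "(a = a' \<and> b = b') \<or> (a = b' \<and> b = a')" by (auto simp: doubleton_eq_iff)
  then show ?thesis
  proof
    assume "a = a' \<and> b = b'"
    then show ?thesis using e(4) assms(2,3)
      by (cases a; cases b) (auto simp: kplus_adj_def K_adj_def)
  next
    assume h: "a = b' \<and> b = a'"
    then have "H (snd (snd b)) (snd (snd a))" using e(4) assms(2,3)
      by (cases a; cases b) (auto simp: kplus_adj_def K_adj_def)
    then show ?thesis using sg aV inV unfolding simple_graph_on_def by auto
  qed
qed

lemma adjV: assumes "adjE a b" shows "a \<in> V \<and> b \<in> V"
  using F_verts[of a b] assms unfolding adjE_def by simp

lemma no_common:
  assumes "{a,b} \<in> F" "adjE a z" "adjE b z" shows False
proof -
  have etf: "ETF F" using conf unfolding configuration_def by auto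
  have "{a,z} \<in> F" "{z,b} \<in> F"
    using assms unfolding adjE_def by (auto simp: insert_commute)
  moreover have "external_edge {a,z}"
    using assms(2) unfolding adjE_def external_edge_def by blast
  ultimately show False using etf assms(1) unfolding ETF_def by blast
qed

lemma RR_nn: "0 \<le> RR a"
  unfolding RR_def by (intro sum_nonneg) (auto simp: phi_props)

lemma CC_nn: "0 \<le> CC a b"
  unfolding CC_def by (intro sum_nonneg) (auto simp: phi_props)

lemma CC_le1: "CC a b \<le> RR a"
  unfolding CC_def RR_def by (intro sum_mono) (auto simp: phi_props)

lemma CC_le2: "CC a b \<le> RR b"
  unfolding CC_def RR_def by (intro sum_mono) (auto simp: phi_props)

lemma CC_sqrt: "CC a b \<le> sqrt (RR a) * sqrt (RR b)"
proof -
  have "(CC a b)^2 \<le> RR a * RR b"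
    using mult_mono[OF CC_le1 CC_le2 RR_nn CC_nn] by (simp add: power2_eq_square)
  then have "sqrt ((CC a b)^2) \<le> sqrt (RR a * RR b)" by (rule real_sqrt_le_mono)
  then show ?thesis using CC_nn by (simp add: real_sqrt_mult)
qed

lemma CC_side: "fst a \<noteq> fst b \<Longrightarrow> CC a b = 0"
  unfolding CC_def adjE_def by (intro sum.neutral) auto

lemma CC_F: assumes "{a,b} \<in> F" shows "CC a b = 0"
  unfolding CC_def
proof (intro sum.neutral ballI)
  fix z show "(if adjE a z \<and> adjE b z then \<phi> z else 0) = 0" using no_common[OF assms, of z] by auto
qed


abbreviation vx :: "kpv \<Rightarrow> nat" where "vx a \<equiv> snd (snd a)"

lemma phi_nn: "a \<in> V \<Longrightarrow> 0 \<le> \<phi> a" using phi_props by simp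

lemma q_le1: "CC a b / (sqrt (RR a) * sqrt (RR b)) \<le> 1"
proof (cases "sqrt (RR a) * sqrt (RR b) = 0")
  case True then show ?thesis by (simp only: True div_by_0)
next
  case False
  then have "sqrt (RR a) * sqrt (RR b) > 0" using RR_nn
    by (metis less_eq_real_def mult_nonneg_nonneg real_sqrt_ge_zero)
  then show ?thesis using CC_sqrt by simp
qed

lemma C1:
  assumes a: "a \<in> V" and b: "b \<in> V"
  shows "(if fst a = fst b \<and> vx a \<noteq> vx b \<and> {a,b} \<in> F then \<phi> a * \<phi> b else 0)
     \<le> (if fst a = fst b \<and> H (vx a) (vx b) then \<phi> a * \<phi> b else 0)
       - (if H (vx a) (vx b) then \<phi> a * \<phi> b * (CC a b / (sqrt (RR a) * sqrt (RR b))) else 0)"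
proof -
  have pp: "0 \<le> \<phi> a * \<phi> b" using phi_nn a b by simp
  have q: "CC a b / (sqrt (RR a) * sqrt (RR b)) \<le> 1" by (rule q_le1)
  show ?thesis
  proof (cases "fst a = fst b")
    case False
    then show ?thesis using CC_side[OF False] by simp
  next
    case side: True
    show ?thesis
    proof (cases "H (vx a) (vx b)")
      case False
      then have "\<not> (vx a \<noteq> vx b \<and> {a,b} \<in> F)" using F_H side by blast
      then show ?thesis using False side by auto
    next
      case Hab: True
      have ne: "vx a \<noteq> vx b" using Hab sg a inV unfolding simple_graph_on_def by auto
      show ?thesis
      proof (cases "{a,b} \<in> F")
        case True
        then show ?thesis using CC_F[OF True] side Hab ne by simp
      next
        case False
        have "\<phi> a * \<phi> b * (CC a b / (sqrt (RR a) * sqrt (RR b))) \<le> \<phi> a * \<phi> b * 1"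
          by (rule mult_left_mono[OF q pp])
        then show ?thesis using False side Hab by simp
      qed
    qed
  qed
qed

definition S2 where "S2 = (\<Sum>a\<in>V. \<Sum>b\<in>V. if H (vx a) (vx b) then \<phi> a * \<phi> b * (CC a b / (sqrt (RR a) * sqrt (RR b))) else 0)"

lemma S1: "(\<Sum>a\<in>V. \<Sum>b\<in>V. if fst a = fst b \<and> H (vx a) (vx b) then \<phi> a * \<phi> b else 0) = 2 * real t * real d"
proof -
  have inner: "(\<Sum>b\<in>V. if fst a = fst b \<and> H (vx a) (vx b) then \<phi> a * \<phi> b else 0) = \<phi> a * real d"
    if a: "a \<in> V" for a
  proof -
    have "(\<Sum>b\<in>V. if fst a = fst b \<and> H (vx a) (vx b) then \<phi> a * \<phi> b else 0)
        = (\<Sum>w<t. if H (vx a) w then \<phi> a else 0)"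
      unfolding split_sum
    proof (intro sum.cong refl)
      fix w assume "w \<in> {..<t}"
      then have w: "w < t" by simp
      have s1: "\<phi> (fst a, True, w) + \<phi> (fst a, False, w) = 1" using phi_sum[OF w] .
      show "(if fst a = fst (True, True, w) \<and> H (vx a) (vx (True, True, w)) then \<phi> a * \<phi> (True, True, w) else 0) +
          (if fst a = fst (True, False, w) \<and> H (vx a) (vx (True, False, w)) then \<phi> a * \<phi> (True, False, w) else 0) +
          (if fst a = fst (False, True, w) \<and> H (vx a) (vx (False, True, w)) then \<phi> a * \<phi> (False, True, w) else 0) +
          (if fst a = fst (False, False, w) \<and> H (vx a) (vx (False, False, w)) then \<phi> a * \<phi> (False, False, w) else 0) =
          (if H (vx a) w then \<phi> a else 0)"
      proof (cases "fst a")
        case True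
        then show ?thesis using s1 by (simp add: distrib_left[symmetric])
      next
        case False
        then show ?thesis using s1 by (simp add: distrib_left[symmetric])
      qed
    qed
    also have "\<dots> = \<phi> a * (\<Sum>w<t. if H (vx a) w then 1 else 0)"
      unfolding sum_distrib_left by (intro sum.cong) auto
    also have "(\<Sum>w<t. if H (vx a) w then (1::real) else 0) = real (card {w\<in>{..<t}. H (vx a) w})"
      by (rule sum_indicator_card) simp
    also have "{w\<in>{..<t}. H (vx a) w} = {w. w < t \<and> H (vx a) w}" by auto
    also have "card {w. w < t \<and> H (vx a) w} = d" using reg a inV unfolding regular_on_def by auto
    finally show ?thesis .
  qed
  have "(\<Sum>a\<in>V. \<Sum>b\<in>V. if fst a = fst b \<and> H (vx a) (vx b) then \<phi> a * \<phi> b else 0) = (\<Sum>a\<in>V. \<phi> a * real d)"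
    using inner by (intro sum.cong) auto
  also have "\<dots> = 2 * real t * real d" using sum_phi by (simp add: sum_distrib_right[symmetric])
  finally show ?thesis .
qed

lemma IO_le: "IO \<le> 2 * real t * real d - S2"
proof -
  have "IO \<le> (\<Sum>a\<in>V. \<Sum>b\<in>V. (if fst a = fst b \<and> H (vx a) (vx b) then \<phi> a * \<phi> b else 0)
       - (if H (vx a) (vx b) then \<phi> a * \<phi> b * (CC a b / (sqrt (RR a) * sqrt (RR b))) else 0))"
    unfolding IO_def by (intro sum_mono C1) auto
  also have "\<dots> = 2 * real t * real d - S2"
    unfolding S2_def S1[symmetric] by (simp add: sum_subtractf)
  finally show ?thesis .
qed


lemma S2_eq: "S2 = (\<Sum>z\<in>V. \<phi> z * (\<Sum>a\<in>V. \<Sum>b\<in>V. if H (vx a) (vx b) then gg z a * gg z b else 0))"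
proof -
  have pt: "\<phi> a * \<phi> b * (CC a b / (sqrt (RR a) * sqrt (RR b))) = (\<Sum>z\<in>V. \<phi> z * (gg z a * gg z b))" for a b
  proof -
    have "(\<Sum>z\<in>V. \<phi> z * (gg z a * gg z b)) = (\<Sum>z\<in>V. (\<phi> a / sqrt (RR a)) * (\<phi> b / sqrt (RR b)) * (if adjE a z \<and> adjE b z then \<phi> z else 0))"
      unfolding gg_def by (intro sum.cong) auto
    also have "\<dots> = (\<phi> a / sqrt (RR a)) * (\<phi> b / sqrt (RR b)) * CC a b"
      unfolding CC_def by (simp add: sum_distrib_left)
    finally show ?thesis by simp
  qed
  have "S2 = (\<Sum>a\<in>V. \<Sum>b\<in>V. \<Sum>z\<in>V. if H (vx a) (vx b) then \<phi> z * (gg z a * gg z b) else 0)"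
    unfolding S2_def pt by (intro sum.cong refl) auto
  also have "\<dots> = (\<Sum>a\<in>V. \<Sum>z\<in>V. \<Sum>b\<in>V. if H (vx a) (vx b) then \<phi> z * (gg z a * gg z b) else 0)"
    by (intro sum.cong refl sum.swap)
  also have "\<dots> = (\<Sum>z\<in>V. \<Sum>a\<in>V. \<Sum>b\<in>V. if H (vx a) (vx b) then \<phi> z * (gg z a * gg z b) else 0)"
    by (rule sum.swap)
  also have "\<dots> = (\<Sum>z\<in>V. \<phi> z * (\<Sum>a\<in>V. \<Sum>b\<in>V. if H (vx a) (vx b) then gg z a * gg z b else 0))"
    unfolding sum_distrib_left by (intro sum.cong refl) auto
  finally show ?thesis .
qed

lemma inner_bound:
  "(\<Sum>a\<in>V. \<Sum>b\<in>V. if H (vx a) (vx b) then gg z a * gg z b else 0)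
     \<ge> real d / real t * (SS z)^2 - 4 * \<sigma> * (\<Sum>a\<in>V. (gg z a)^2)"
proof -
  have "(\<Sum>a\<in>V. \<Sum>b\<in>V. if H (vx a) (vx b) then gg z a * gg z b else 0)
      = (\<Sum>u<t. \<Sum>w<t. if H u w then quad (gg z) u * quad (gg z) w else 0)"
    by (rule quad_form)
  moreover have "SS z = (\<Sum>u<t. quad (gg z) u)" unfolding SS_def by (rule sum_quad)
  moreover have "\<sigma> * (\<Sum>u<t. (quad (gg z) u)^2) \<le> \<sigma> * (4 * (\<Sum>a\<in>V. (gg z a)^2))"
    using mult_left_mono[OF quad_sq sig] by simp
  ultimately show ?thesis using mix[of "quad (gg z)"] by simp
qed

lemma err_bound: "(\<Sum>z\<in>V. \<phi> z * (\<Sum>a\<in>V. (gg z a)^2)) \<le> 2 * real t"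
proof -
  have g2: "(gg z a)^2 = (if adjE a z then (\<phi> a)^2 / RR a else 0)" for z a
    unfolding gg_def using RR_nn by (simp add: power_divide)
  have "(\<Sum>z\<in>V. \<phi> z * (\<Sum>a\<in>V. (gg z a)^2)) = (\<Sum>z\<in>V. \<Sum>a\<in>V. if adjE a z then \<phi> z * ((\<phi> a)^2 / RR a) else 0)"
    unfolding g2 sum_distrib_left by (intro sum.cong refl) auto
  also have "\<dots> = (\<Sum>a\<in>V. \<Sum>z\<in>V. if adjE a z then \<phi> z * ((\<phi> a)^2 / RR a) else 0)" by (rule sum.swap)
  also have "\<dots> = (\<Sum>a\<in>V. ((\<phi> a)^2 / RR a) * RR a)"
    unfolding RR_def sum_distrib_left by (intro sum.cong refl) auto
  also have "\<dots> \<le> (\<Sum>a\<in>V. \<phi> a)"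
  proof (intro sum_mono)
    fix a assume a: "a \<in> V"
    have "(\<phi> a)^2 \<le> \<phi> a" using phi_props[OF a] by (simp add: power2_eq_square mult_left_le)
    moreover have "((\<phi> a)^2 / RR a) * RR a \<le> (\<phi> a)^2"
      by (cases "RR a = 0") auto
    ultimately show "((\<phi> a)^2 / RR a) * RR a \<le> \<phi> a" by linarith
  qed
  also have "\<dots> = 2 * real t" by (rule sum_phi)
  finally show ?thesis .
qed

lemma S2_ge: "S2 \<ge> real d / real t * PP - 8 * \<sigma> * real t"
proof -
  have "(\<Sum>z\<in>V. \<phi> z * (real d / real t * (SS z)^2 - 4 * \<sigma> * (\<Sum>a\<in>V. (gg z a)^2))) \<le> S2"
    unfolding S2_eq by (intro sum_mono mult_left_mono inner_bound phi_nn)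
  moreover have "(\<Sum>z\<in>V. \<phi> z * (real d / real t * (SS z)^2 - 4 * \<sigma> * (\<Sum>a\<in>V. (gg z a)^2)))
      = real d / real t * PP - 4 * \<sigma> * (\<Sum>z\<in>V. \<phi> z * (\<Sum>a\<in>V. (gg z a)^2))"
    unfolding PP_def by (simp add: algebra_simps sum_subtractf sum_distrib_left)
  moreover have "4 * \<sigma> * (\<Sum>z\<in>V. \<phi> z * (\<Sum>a\<in>V. (gg z a)^2)) \<le> 4 * \<sigma> * (2 * real t)"
    using err_bound sig by (intro mult_left_mono) auto
  ultimately show ?thesis by linarith
qed

end

context cfg begin

definition UU where "UU = (\<Sum>z\<in>V. \<phi> z * SS z * sqrt (RR z))"

lemma EO_nn: "0 \<le> EO"
  unfolding EO_def by (intro sum_nonneg) (auto simp: phi_nn adjV)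

lemma EO_RR: "EO = (\<Sum>z\<in>V. \<phi> z * RR z)"
  unfolding EO_def RR_def sum_distrib_left by (intro sum.cong refl) auto

lemma UU_cs: "UU^2 \<le> PP * EO"
proof -
  have "UU = (\<Sum>z\<in>V. (sqrt (\<phi> z) * SS z) * (sqrt (\<phi> z) * sqrt (RR z)))"
    unfolding UU_def
  proof (intro sum.cong refl)
    fix z assume z: "z \<in> V"
    have "sqrt (\<phi> z) * sqrt (\<phi> z) = \<phi> z" using phi_nn[OF z] by simp
    then show "\<phi> z * SS z * sqrt (RR z) = (sqrt (\<phi> z) * SS z) * (sqrt (\<phi> z) * sqrt (RR z))"
      by (metis mult.assoc mult.commute)
  qed
  then have "UU^2 \<le> (\<Sum>z\<in>V. (sqrt (\<phi> z) * SS z)^2) * (\<Sum>z\<in>V. (sqrt (\<phi> z) * sqrt (RR z))^2)"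
    by (simp add: cs_sum)
  also have "(\<Sum>z\<in>V. (sqrt (\<phi> z) * SS z)^2) = PP"
    unfolding PP_def by (intro sum.cong refl) (simp add: power_mult_distrib phi_nn)
  also have "(\<Sum>z\<in>V. (sqrt (\<phi> z) * sqrt (RR z))^2) = EO"
    unfolding EO_RR by (intro sum.cong refl) (simp add: power_mult_distrib phi_nn RR_nn)
  finally show ?thesis .
qed

definition KK where "KK a z = (if adjE a z then \<phi> a * \<phi> z * (sqrt (RR z) / sqrt (RR a)) else 0)"

lemma RR_ge: assumes "adjE a z" shows "\<phi> z \<le> RR a"
proof -
  have z: "z \<in> V" using adjV assms by auto
  have "(if adjE a z then \<phi> z else 0) \<le> RR a" unfolding RR_def
    by (rule member_le_sum[OF z]) (auto simp: phi_nn adjV)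
  then show ?thesis using assms by simp
qed

lemma KK_pair: "KK a z + KK z a \<ge> 2 * (if adjE a z then \<phi> a * \<phi> z else 0)"
proof (cases "adjE a z")
  case False
  then show ?thesis unfolding KK_def using adj_sym by auto
next
  case True
  have za: "adjE z a" using True adj_sym by auto
  have V: "a \<in> V" "z \<in> V" using adjV True by auto
  show ?thesis
  proof (cases "\<phi> a = 0 \<or> \<phi> z = 0")
    case True
    then show ?thesis unfolding KK_def by auto
  next
    case False
    then have pa: "\<phi> a > 0" and pz: "\<phi> z > 0" using phi_nn V by (auto simp: less_le)
    have ra: "RR a > 0" using RR_ge[OF True] pz by linarith
    have rz: "RR z > 0" using RR_ge[OF za] pa by linarith
    define x where "x = sqrt (RR z)"
    define y where "y = sqrt (RR a)"
    have x: "x > 0" and y: "y > 0" using ra rz by (auto simp: x_def y_def)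
    have "x / y + y / x \<ge> 2"
    proof -
      have "x / y + y / x - 2 = (x - y)^2 / (x * y)" using x y
        by (simp add: field_simps power2_eq_square)
      also have "\<dots> \<ge> 0" using x y by simp
      finally show ?thesis by simp
    qed
    then have "\<phi> a * \<phi> z * (x / y + y / x) \<ge> \<phi> a * \<phi> z * 2"
      using pa pz by (intro mult_left_mono) auto
    then show ?thesis unfolding KK_def using True za
      by (simp add: x_def y_def algebra_simps)
  qed
qed

lemma UU_ge: "UU \<ge> EO"
proof -
  have U1: "UU = (\<Sum>z\<in>V. \<Sum>a\<in>V. KK a z)"
    unfolding UU_def SS_def sum_distrib_left sum_distrib_right
    by (intro sum.cong refl) (auto simp: KK_def gg_def)
  have U2: "UU = (\<Sum>a\<in>V. \<Sum>z\<in>V. KK a z)" unfolding U1 by (rule sum.swap)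
  have "2 * UU = (\<Sum>a\<in>V. \<Sum>z\<in>V. KK a z + KK z a)"
    using U1 U2 by (simp add: sum.distrib)
  also have "\<dots> \<ge> (\<Sum>a\<in>V. \<Sum>z\<in>V. 2 * (if adjE a z then \<phi> a * \<phi> z else 0))"
    by (intro sum_mono KK_pair)
  finally have "2 * UU \<ge> 2 * EO" unfolding EO_def by (simp add: sum_distrib_left)
  then show ?thesis by simp
qed

lemma PP_ge: "PP \<ge> EO"
proof (cases "EO = 0")
  case True
  have "PP \<ge> 0" unfolding PP_def by (intro sum_nonneg) (auto simp: phi_nn)
  then show ?thesis using True by simp
next
  case False
  then have e: "EO > 0" using EO_nn by simp
  have "EO^2 \<le> UU^2" using UU_ge EO_nn by (intro power_mono) auto
  then have "EO * EO \<le> PP * EO" using UU_cs by (simp add: power2_eq_square)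
  then show ?thesis using e by simp
qed

lemma IO_final: "IO \<le> 2 * real t * real d - real d / real t * EO + 8 * \<sigma> * real t"
proof -
  have "real d / real t * EO \<le> real d / real t * PP" using PP_ge by (intro mult_left_mono) auto
  then show ?thesis using IO_le S2_ge by linarith
qed

end


context cfg begin

lemma IS_eq: "(\<Sum>e\<in>{e\<in>F. internal_edge e}. \<Prod>v\<in>e. \<phi> v) = IO / 2"
proof -
  define P where "P a b \<longleftrightarrow> fst a = fst b \<and> vx a \<noteq> vx b \<and> {a,b} \<in> F" for a b
  have set_eq: "{e\<in>F. internal_edge e} = {{a, b} | a b. a \<in> V \<and> b \<in> V \<and> P a b}"
  proof (intro equalityI subsetI)
    fix e assume "e \<in> {e\<in>F. internal_edge e}"
    then obtain a b where e: "e \<in> F" "e = {a,b}" "fst a = fst b" "vx a \<noteq> vx b"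
      unfolding internal_edge_def by blast
    then have "a \<in> V" "b \<in> V" using F_verts by auto
    then show "e \<in> {{a, b} | a b. a \<in> V \<and> b \<in> V \<and> P a b}"
      using e unfolding P_def by (intro CollectI exI[of _ a] exI[of _ b]) simp
  next
    fix e assume "e \<in> {{a, b} | a b. a \<in> V \<and> b \<in> V \<and> P a b}"
    then obtain a b where e: "e = {a,b}" "P a b" by blast
    then show "e \<in> {e\<in>F. internal_edge e}"
      unfolding P_def internal_edge_def by blast
  qed
  have "IO = (\<Sum>a\<in>V. \<Sum>b\<in>V. if P a b then \<phi> a * \<phi> b else 0)"
    unfolding IO_def P_def ..
  also have "\<dots> = 2 * (\<Sum>e\<in>{{a, b} | a b. a \<in> V \<and> b \<in> V \<and> P a b}. \<Prod>v\<in>e. \<phi> v)"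
    by (rule pair_sum) (auto simp: P_def insert_commute)
  finally show ?thesis unfolding set_eq by simp
qed

lemma ES_eq: "(\<Sum>e\<in>{e\<in>F. external_edge e}. \<Prod>v\<in>e. \<phi> v) = EO / 2"
proof -
  have set_eq: "{e\<in>F. external_edge e} = {{a, b} | a b. a \<in> V \<and> b \<in> V \<and> adjE a b}"
  proof (intro equalityI subsetI)
    fix e assume "e \<in> {e\<in>F. external_edge e}"
    then obtain a b where e: "e \<in> F" "e = {a,b}" "fst a \<noteq> fst b"
      unfolding external_edge_def by blast
    then have "a \<in> V" "b \<in> V" using F_verts by auto
    then show "e \<in> {{a, b} | a b. a \<in> V \<and> b \<in> V \<and> adjE a b}"
      using e unfolding adjE_def by (intro CollectI exI[of _ a] exI[of _ b]) simp
  next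
    fix e assume "e \<in> {{a, b} | a b. a \<in> V \<and> b \<in> V \<and> adjE a b}"
    then obtain a b where e: "e = {a,b}" "adjE a b" by blast
    then show "e \<in> {e\<in>F. external_edge e}"
      unfolding adjE_def external_edge_def by blast
  qed
  have "EO = 2 * (\<Sum>e\<in>{{a, b} | a b. a \<in> V \<and> b \<in> V \<and> adjE a b}. \<Prod>v\<in>e. \<phi> v)"
    unfolding EO_def by (rule pair_sum) (auto simp: adjE_def insert_commute)
  then show ?thesis unfolding set_eq by simp
qed

lemma RR_le: assumes z: "z \<in> V" shows "RR z \<le> real t"
proof -
  have "RR z \<le> (\<Sum>w\<in>V. if fst w \<noteq> fst z then \<phi> w else 0)"
    unfolding RR_def by (intro sum_mono) (auto simp: adjE_def phi_nn F_verts)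
  also have "\<dots> = (\<Sum>u<t. (1::real))"
    unfolding split_sum
  proof (intro sum.cong refl)
    fix u assume "u \<in> {..<t}"
    then have u: "u < t" by simp
    show "(if fst (True, True, u) \<noteq> fst z then \<phi> (True, True, u) else 0) +
        (if fst (True, False, u) \<noteq> fst z then \<phi> (True, False, u) else 0) +
        (if fst (False, True, u) \<noteq> fst z then \<phi> (False, True, u) else 0) +
        (if fst (False, False, u) \<noteq> fst z then \<phi> (False, False, u) else 0) = 1"
      using phi_sum[OF u, of True] phi_sum[OF u, of False] by (cases "fst z") auto
  qed
  finally show ?thesis by simp
qed

lemma EO_le: "EO \<le> 2 * (real t)^2"
proof -
  have "EO \<le> (\<Sum>z\<in>V. \<phi> z * real t)"
    unfolding EO_RR by (intro sum_mono mult_left_mono RR_le phi_nn)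
  also have "\<dots> = 2 * (real t)^2" using sum_phi by (simp add: sum_distrib_right[symmetric] power2_eq_square)
  finally show ?thesis .
qed

lemma zeta_bound:
  assumes t: "t > 0"
  shows "zeta_i t d F \<phi> + zeta_e t F \<phi> \<le> 1 + 4 * \<sigma> / real d"
proof -
  have zi: "zeta_i t d F \<phi> = IO / (2 * real t * real d)"
    unfolding zeta_i_def IS_eq by simp
  have ze: "zeta_e t F \<phi> = EO / (2 * (real t)^2)"
    unfolding zeta_e_def ES_eq by simp
  show ?thesis
  proof (cases "d = 0")
    case True
    then show ?thesis using zi ze EO_le t by (simp add: divide_le_eq)
  next
    case False
    then have dp: "real d > 0" by simp
    have tp: "real t > 0" using t by simp
    have "IO / (2 * real t * real d) \<le> (2 * real t * real d - real d / real t * EO + 8 * \<sigma> * real t) / (2 * real t * real d)"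
      using IO_final tp dp by (intro divide_right_mono) auto
    also have "\<dots> = 1 - EO / (2 * (real t)^2) + 4 * \<sigma> / real d"
      using tp dp by (simp add: field_simps power2_eq_square)
    finally show ?thesis using zi ze by simp
  qed
qed

end



lemma T_eq:
  fixes t d :: nat and H :: "nat \<Rightarrow> nat \<Rightarrow> bool"
  assumes sym: "\<forall>u<t. \<forall>w<t. H u w \<longleftrightarrow> H w u"
    and reg: "\<forall>u<t. card {w. w < t \<and> H u w} = d" and t: "t > 0"
  shows "(\<Sum>j<t. \<Sum>k<t. (real (card {i. i<t \<and> H j i \<and> H i k}) - real d^2 / real t)^2)
       = (\<Sum>j<t. \<Sum>k<t. (real (card {i. i<t \<and> H j i \<and> H i k}))^2) - real d^4"
proof -
  define c where "c j k = real (card {i. i<t \<and> H j i \<and> H i k})" for j k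
  have cs: "c j k = (\<Sum>i<t. if H j i then (if H i k then 1 else 0) else 0)" for j k
  proof -
    have "{i\<in>{..<t}. H j i \<and> H i k} = {i. i<t \<and> H j i \<and> H i k}" by auto
    then have "c j k = (\<Sum>i<t. if H j i \<and> H i k then 1 else 0)"
      unfolding c_def by (simp add: sum_indicator_card)
    then show ?thesis by (simp add: if_distrib cong: if_cong) (smt (verit) sum.cong)
  qed
  have deg: "(\<Sum>w<t. if H u w then (1::real) else 0) = real d" if "u<t" for u
  proof -
    have "{w\<in>{..<t}. H u w} = {w. w < t \<and> H u w}" by auto
    then show ?thesis using reg that by (simp add: sum_indicator_card)
  qed
  have sumc: "(\<Sum>j<t. \<Sum>k<t. c j k) = real t * (real d)^2"
  proof -
    have "(\<Sum>j<t. \<Sum>k<t. c j k) = (\<Sum>j<t. \<Sum>k<t. \<Sum>i<t. if H j i then (if H i k then 1 else 0) else 0)"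
      by (simp add: cs)
    also have "\<dots> = (\<Sum>j<t. \<Sum>i<t. \<Sum>k<t. if H j i then (if H i k then 1 else 0) else 0)"
      by (intro sum.cong refl sum.swap)
    also have "\<dots> = (\<Sum>j<t. \<Sum>i<t. if H j i then real d else 0)"
      by (intro sum.cong refl) (auto simp: deg)
    also have "\<dots> = (\<Sum>j<t. real d * real d)"
    proof (intro sum.cong refl)
      fix j assume "j \<in> {..<t}"
      then have "(\<Sum>i<t. if H j i then (1::real) else 0) = real d" using deg by simp
      moreover have "(\<Sum>i<t. if H j i then real d else 0) = real d * (\<Sum>i<t. if H j i then 1 else 0)"
        unfolding sum_distrib_left by (intro sum.cong) auto
      ultimately show "(\<Sum>i<t. if H j i then real d else 0) = real d * real d" by simp
    qed
    finally show ?thesis by (simp add: power2_eq_square)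
  qed
  have "(\<Sum>j<t. \<Sum>k<t. (c j k - real d^2 / real t)^2)
      = (\<Sum>j<t. \<Sum>k<t. (c j k)^2 - 2 * (real d^2 / real t) * c j k + (real d^2 / real t)^2)"
    by (intro sum.cong refl) (simp add: power2_eq_square algebra_simps)
  also have "\<dots> = (\<Sum>j<t. \<Sum>k<t. (c j k)^2) - 2 * (real d^2 / real t) * (\<Sum>j<t. \<Sum>k<t. c j k)
      + real t * real t * (real d^2 / real t)^2"
    by (simp add: sum.distrib sum_subtractf sum_distrib_left)
  also have "\<dots> = (\<Sum>j<t. \<Sum>k<t. (c j k)^2) - real d^4"
    unfolding sumc using t by (simp add: field_simps power2_eq_square power4_eq_xxxx)
  finally show ?thesis unfolding c_def .
qed

lemma sigma_bound:
  fixes C :: real and d t :: nat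
  assumes sg: "simple_graph_on t H" and reg: "regular_on t H d" and t: "t > 0"
    and eigb: "\<forall>\<mu>\<in>#nontrivial_eigenvalues t H. \<bar>\<mu>\<bar> \<le> C * y"
    and y: "y \<ge> 0"
  shows "(\<Sum>j<t. \<Sum>k<t. (real (card {i. i<t \<and> H j i \<and> H i k}) - real d^2 / real t)^2) \<le> real t * (C * y)^4"
proof -
  have sym: "\<forall>u<t. \<forall>w<t. H u w \<longleftrightarrow> H w u" using sg unfolding simple_graph_on_def by auto
  have reg': "\<forall>u<t. card {w. w < t \<and> H u w} = d" using reg unfolding regular_on_def by auto
  note sp = spectral[OF sg reg]
  define M where "M = Max (set_mset (graph_spectrum t H))"
  have ne: "graph_spectrum t H \<noteq> {#}" using sp(1) t by auto
  then have Min: "M \<in># graph_spectrum t H" unfolding M_def by (simp add: Max_in)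
  have decomp: "graph_spectrum t H = add_mset M (nontrivial_eigenvalues t H)"
    unfolding nontrivial_eigenvalues_def M_def[symmetric] using Min by simp
  have "\<bar>M\<bar> \<le> real d" using sp(3) Min by auto
  then have "\<bar>M\<bar>^4 \<le> real d^4" by (intro power_mono) auto
  then have M4: "M^4 \<le> real d^4" by (simp add: power_even_abs_numeral)
  have "(\<Sum>\<mu>\<in>#nontrivial_eigenvalues t H. \<mu>^4) \<le> (\<Sum>\<mu>\<in>#nontrivial_eigenvalues t H. (C * y)^4)"
  proof (rule sum_mset_mono)
    fix \<mu> assume "\<mu> \<in># nontrivial_eigenvalues t H"
    then have "\<bar>\<mu>\<bar> \<le> C * y" using eigb by auto
    then have "\<bar>\<mu>\<bar>^4 \<le> (C * y)^4" by (intro power_mono) auto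
    then show "\<mu>^4 \<le> (C * y)^4" by (simp add: power_even_abs_numeral)
  qed
  also have "\<dots> = real (size (nontrivial_eigenvalues t H)) * (C * y)^4"
    by (simp add: sum_mset_constant)
  also have "\<dots> \<le> real t * (C * y)^4"
  proof -
    have "size (nontrivial_eigenvalues t H) \<le> t" using sp(1) decomp by (metis le_add2 size_add_mset Suc_le_eq less_or_eq_imp_le) 
    then show ?thesis by (intro mult_right_mono) auto
  qed
  finally have nt: "(\<Sum>\<mu>\<in>#nontrivial_eigenvalues t H. \<mu>^4) \<le> real t * (C * y)^4" .
  have "(\<Sum>j<t. \<Sum>k<t. (real (card {i. i<t \<and> H j i \<and> H i k}) - real d^2 / real t)^2)
      = (\<Sum>\<mu>\<in>#graph_spectrum t H. \<mu>^4) - real d^4"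
    unfolding T_eq[OF sym reg' t] sp(2) ..
  also have "\<dots> = M^4 + (\<Sum>\<mu>\<in>#nontrivial_eigenvalues t H. \<mu>^4) - real d^4"
    by (subst decomp) simp
  finally show ?thesis using M4 nt by linarith
qed


theorem proposition4p4:
  fixes c :: real
    and T :: "nat set"
    and H :: "nat \<Rightarrow> nat \<Rightarrow> nat \<Rightarrow> bool"
    and d :: "nat \<Rightarrow> nat"
  assumes "0 < c" "c \<le> 1"
    and "infinite T" "\<forall>t\<in>T. 0 < t"
    and graphs: "\<forall>t\<in>T. simple_graph_on t (H t) \<and> triangle_free_on t (H t) \<and> regular_on t (H t) (d t)"
    and deg: "\<exists>c1 c2 t0. 0 < c1 \<and> 0 < c2 \<and> (\<forall>t\<in>T. t \<ge> t0 \<longrightarrow>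
                c1 * real t powr (2/3) \<le> real (d t) \<and> real (d t) \<le> c2 * real t powr (2/3))"
    and eig: "\<exists>C t0. 0 < C \<and> (\<forall>t\<in>T. t \<ge> t0 \<longrightarrow>
                (\<forall>\<mu>\<in>#nontrivial_eigenvalues t (H t). \<bar>\<mu>\<bar> \<le> C * real t powr (1/3)))"
  shows "\<exists>\<epsilon> :: nat \<Rightarrow> real.
           (\<forall>\<delta>>0. \<exists>t0. \<forall>t\<in>T. t \<ge> t0 \<longrightarrow> \<bar>\<epsilon> t\<bar> < \<delta>) \<and>
           (\<forall>t\<in>T. \<forall>F \<phi>. configuration t (H t) F \<phi> \<longrightarrow>
                zeta_i t (d t) F \<phi> + zeta_e t F \<phi> < 1 + \<epsilon> t)"
proof -
  obtain c1 c2 t0 where c1: "0 < c1" and c1b: "\<forall>t\<in>T. t \<ge> t0 \<longrightarrow> c1 * real t powr (2/3) \<le> real (d t)"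
    using deg by blast
  obtain C t1 where C: "0 < C" and Cb: "\<forall>t\<in>T. t \<ge> t1 \<longrightarrow>
      (\<forall>\<mu>\<in>#nontrivial_eigenvalues t (H t). \<bar>\<mu>\<bar> \<le> C * real t powr (1/3))"
    using eig by blast
  define Tt where "Tt t = (\<Sum>j<t. \<Sum>k<t. (real (card {i. i<t \<and> H t j i \<and> H t i k}) - real (d t)^2 / real t)^2)" for t
  define \<sigma> where "\<sigma> t = sqrt (sqrt (Tt t))" for t
  define \<epsilon> where "\<epsilon> t = 4 * \<sigma> t / real (d t) + 1 / real t" for t
  have Tt0: "Tt t \<ge> 0" for t unfolding Tt_def by (intro sum_nonneg) auto
  have sig0: "\<sigma> t \<ge> 0" for t unfolding \<sigma>_def using Tt0[of t] by simp
  have eps0: "\<epsilon> t \<ge> 0" for t unfolding \<epsilon>_def using sig0[of t] by simp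
  show ?thesis
  proof (intro exI[of _ \<epsilon>] conjI allI impI ballI)
    fix t F \<phi> assume tT: "t \<in> T" and cf: "configuration t (H t) F \<phi>"
    have t: "t > 0" using tT assms(4) by auto
    have sg: "simple_graph_on t (H t)" and reg: "regular_on t (H t) (d t)" using graphs tT by auto
    have sym: "\<forall>u<t. \<forall>w<t. H t u w \<longleftrightarrow> H t w u" using sg unfolding simple_graph_on_def by auto
    have reg': "\<forall>u<t. card {w. w < t \<and> H t u w} = d t" using reg unfolding regular_on_def by auto
    have mix: "(\<Sum>u<t. \<Sum>w<t. if H t u w then G u * G w else 0)
                  \<ge> real (d t) / real t * (\<Sum>u<t. G u)^2 - \<sigma> t * (\<Sum>u<t. (G u)^2)" for G
      using mixing[OF sym reg', of G] unfolding \<sigma>_def Tt_def by linarith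
    interpret cfg t "H t" "d t" F \<phi> "\<sigma> t"
      using cf sg reg sig0 mix by unfold_locales auto
    have "zeta_i t (d t) F \<phi> + zeta_e t F \<phi> \<le> 1 + 4 * \<sigma> t / real (d t)" by (rule zeta_bound[OF t])
    also have "\<dots> < 1 + \<epsilon> t" unfolding \<epsilon>_def using t by simp
    finally show "zeta_i t (d t) F \<phi> + zeta_e t F \<phi> < 1 + \<epsilon> t" .
  next
    fix \<delta> :: real assume \<delta>: "\<delta> > 0"
    define K where "K = 4096 * C^4 / (c1^4 * \<delta>^4)"
    have K0: "K \<ge> 0" unfolding K_def using C c1 \<delta> by simp
    define N where "N = max (max t0 t1) (max (nat \<lceil>K^3\<rceil> + 1) (nat \<lceil>2/\<delta>\<rceil> + 1))"
    show "\<exists>t0. \<forall>t\<in>T. t0 \<le> t \<longrightarrow> \<bar>\<epsilon> t\<bar> < \<delta>"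
    proof (intro exI[of _ N] ballI impI)
      fix t assume tT: "t \<in> T" and tN: "N \<le> t"
      have t: "t > 0" using tT assms(4) by auto
      have sg: "simple_graph_on t (H t)" and reg: "regular_on t (H t) (d t)" using graphs tT by auto
      define x where "x = real t"
      have x0: "x > 0" unfolding x_def using t by simp
      have xK: "x > K^3"
      proof -
        have "real (nat \<lceil>K^3\<rceil> + 1) \<le> x" unfolding x_def using tN unfolding N_def by linarith
        moreover have "K^3 \<le> real (nat \<lceil>K^3\<rceil>)" by linarith
        ultimately show ?thesis by simp
      qed
      have xd: "x > 2 / \<delta>"
      proof -
        have "real (nat \<lceil>2/\<delta>\<rceil> + 1) \<le> x" unfolding x_def using tN unfolding N_def by linarith
        moreover have "2/\<delta> \<le> real (nat \<lceil>2/\<delta>\<rceil>)" by linarith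
        ultimately show ?thesis by simp
      qed
      define y where "y = x powr (1/3)"
      have y0: "y > 0" unfolding y_def using x0 by simp
      have y3: "y^3 = x"
      proof -
        have "y^3 = y powr (real 3)" using y0 by (simp add: powr_realpow)
        also have "\<dots> = x" unfolding y_def using x0 by (simp add: powr_powr)
        finally show ?thesis .
      qed
      have y2: "y^2 = x powr (2/3)"
      proof -
        have "y^2 = y powr (real 2)" using y0 by (simp add: powr_realpow)
        also have "\<dots> = x powr (2/3)" unfolding y_def using x0 by (simp add: powr_powr)
        finally show ?thesis .
      qed
      have yK: "y > K"
      proof (rule ccontr)
        assume "\<not> y > K"
        then have "y^3 \<le> K^3" using y0 by (intro power_mono) auto
        then show False using xK y3 by simp
      qed
      have dlow: "c1 * y^2 \<le> real (d t)" using c1b tT tN unfolding N_def y2 x_def by auto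
      have eigb: "\<forall>\<mu>\<in>#nontrivial_eigenvalues t (H t). \<bar>\<mu>\<bar> \<le> C * y"
        using Cb tT tN unfolding N_def y_def x_def by auto
      have Tb: "Tt t \<le> real t * (C * y)^4"
        unfolding Tt_def using sigma_bound[OF sg reg t eigb] y0 by simp
      have s4: "(\<sigma> t)^4 = Tt t"
      proof -
        have "(\<sigma> t)^4 = ((\<sigma> t)^2)^2" by (simp flip: power_mult)
        also have "(\<sigma> t)^2 = sqrt (Tt t)" unfolding \<sigma>_def using Tt0[of t] by simp
        also have "(sqrt (Tt t))^2 = Tt t" using Tt0[of t] by simp
        finally show ?thesis .
      qed
      have s4b: "(\<sigma> t)^4 \<le> C^4 * y^7"
      proof -
        have "real t * (C * y)^4 = C^4 * y^7" using y3 unfolding x_def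
          by (simp add: power_mult_distrib power_add[symmetric] flip: y3[unfolded x_def])
        then show ?thesis using s4 Tb by simp
      qed
      have dpos: "real (d t) > 0" using dlow c1 y0 by (smt (verit) mult_pos_pos zero_less_power)
      define A where "A = 4 * \<sigma> t / real (d t)"
      have A0: "A \<ge> 0" unfolding A_def using sig0 dpos by simp
      have "A^4 = 256 * (\<sigma> t)^4 / (real (d t))^4" unfolding A_def by (simp add: power_divide)
      also have "\<dots> \<le> 256 * (C^4 * y^7) / (c1 * y^2)^4"
        using s4b dlow c1 y0 by (intro frac_le mult_left_mono power_mono) auto
      also have "\<dots> = 256 * C^4 / (c1^4 * y)"
      proof -
        have "y^8 = y * y^7" by (simp add: power_Suc[symmetric] del: power_Suc)
        then show ?thesis using c1 y0 by (simp add: field_simps power_mult_distrib flip: power_mult)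
      qed
      also have "\<dots> < (\<delta>/2)^4"
      proof -
        have "4096 * C^4 < c1^4 * \<delta>^4 * y" using yK c1 \<delta> unfolding K_def
          by (simp add: field_simps)
        then show ?thesis using c1 y0 \<delta> by (simp add: field_simps power_divide)
      qed
      finally have "A < \<delta>/2" using \<delta> by (intro power_less_imp_less_base[of A 4]) auto
      moreover have "1 / real t < \<delta>/2" using xd \<delta> x0 unfolding x_def by (simp add: field_simps)
      ultimately show "\<bar>\<epsilon> t\<bar> < \<delta>" using eps0[of t] unfolding \<epsilon>_def A_def by simp
    qed
  qed
qed

end
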